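(* Let $S_m$ be the random walk below and $I$ the function below. Then for every integer $m>0$ and $x\in[0,1)$, $$\mathbb P\Big(\sup_{0\le k\le m}S_k\ge xm\Big)\le e^{-mI(x)},$$ in particular $\mathbb P(S_m\ge xm)\le e^{-mI(x)}$. Furthermore there is $\varepsilon>0$ with $I(x)\ge\varepsilon x^2$ for all $x\in[0,1)$, and consequently $\mathbb P(\sup_{0\le k\le m}S_k\ge xm)\le e^{-\varepsilon mx^2}$ and $\mathbb P(S_m\ge xm)\le e^{-\varepsilon mx^2}$ for all $x\ge0$.
   Context: $S_m=X^{(1)}+\dots+X^{(m)}$, $S_0=0$, with i.i.d. steps distributed as $X=X_1+X_2$, where $X_1,X_2$ are independent, $\mathbb P(X_1=0)=(\sqrt2-1)/\sqrt2$, $\mathbb P(X_1=1)=1/\sqrt2$, $\mathbb P(X_2=-k)=\sqrt2(\sqrt2-1)^{k+1}$ for $k=0,1,2,\dots$. For $x<1$, $$I(x)=(2-x)\log(\sqrt2+1)+(1-x)\log\Big(\frac{1-x}{1+\sqrt{1+(1-x)^2}}\Big)+\log\Big(\frac{x+\sqrt{1+(1-x)^2}}{2-x+\sqrt{1+(1-x)^2}}\Big).$$ *)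

theory Defs
  imports "HOL-Probability.Probability"
begin

definition X1_pmf :: "int pmf" where
  "X1_pmf = map_pmf (\<lambda>b. if b then 1 else 0) (bernoulli_pmf (1 / sqrt 2))"

text \<open>X2: P(X2 = -k) = sqrt 2 (sqrt 2 - 1)^(k+1) = (1 - q)^k q with q = 2 - sqrt 2,
  i.e. X2 is minus a geometric variable with success parameter 2 - sqrt 2.\<close>
definition X2_pmf :: "int pmf" where
  "X2_pmf = map_pmf (\<lambda>k. - int k) (geometric_pmf (2 - sqrt 2))"

definition step_pmf :: "int pmf" where
  "step_pmf = map_pmf (\<lambda>(a, b). a + b) (pair_pmf X1_pmf X2_pmf)"

definition steps_pmf :: "nat \<Rightarrow> int list pmf" where
  "steps_pmf m = replicate_pmf m step_pmf"

definition S :: "int list \<Rightarrow> nat \<Rightarrow> int" where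
  "S xs k = sum_list (take k xs)"

definition rate_I :: "real \<Rightarrow> real" where
  "rate_I x = (2 - x) * ln (sqrt 2 + 1)
     + (1 - x) * ln ((1 - x) / (1 + sqrt (1 + (1 - x)^2)))
     + ln ((x + sqrt (1 + (1 - x)^2)) / (2 - x + sqrt (1 + (1 - x)^2)))"

end

theory Submission
  imports Defs
begin


definition aa :: real where "aa = sqrt 2 - 1"

lemma sqrt2_bnd: "1.4 < sqrt (2::real)" "sqrt (2::real) < 1.5"
proof -
  show "1.4 < sqrt (2::real)" by (rule real_less_rsqrt) (simp add: power2_eq_square)
  show "sqrt (2::real) < 1.5" by (rule real_less_lsqrt) (simp_all add: power2_eq_square)
qed

lemma aa_pos: "aa > 0" and aa_lt1: "aa < 1" and aa_sq: "aa^2 = 3 - 2 * sqrt 2"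
  and aa_q: "sqrt 2 * aa = 2 - sqrt 2" and aa_inv: "aa * (sqrt 2 + 1) = 1"
  unfolding aa_def using sqrt2_bnd by (auto simp: power2_eq_square algebra_simps)

lemma geom_mgf:
  assumes u: "u > aa"
  shows "(\<integral>\<^sup>+k. ennreal (u powr (- real k)) \<partial>geometric_pmf (2 - sqrt 2))
         = ennreal ((2 - sqrt 2) * u / (u - aa))"
proof -
  have q: "0 < 2 - sqrt 2" "2 - sqrt 2 \<le> (1::real)" using sqrt2_bnd by auto
  have up: "u > 0" using u aa_pos by linarith
  have e: "(1 - (2 - sqrt 2)) ^ k * (2 - sqrt 2) * u powr (- real k) = (2 - sqrt 2) * (aa / u) ^ k" for k
    using up by (simp add: powr_minus powr_realpow aa_def power_divide field_simps)
  have s: "(\<lambda>k. (2 - sqrt 2) * (aa / u) ^ k) sums ((2 - sqrt 2) * (1 / (1 - aa / u)))"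
    by (intro sums_mult geometric_sums) (use u aa_pos up in auto)
  have "(\<integral>\<^sup>+k. ennreal (u powr (- real k)) \<partial>geometric_pmf (2 - sqrt 2))
     = (\<Sum>k. ennreal ((2 - sqrt 2) * (aa / u) ^ k))"
  proof -
    have "(\<integral>\<^sup>+k. ennreal (u powr (- real k)) \<partial>geometric_pmf (2 - sqrt 2))
      = (\<integral>\<^sup>+k. ennreal (pmf (geometric_pmf (2 - sqrt 2)) k) * ennreal (u powr (- real k)) \<partial>count_space UNIV)"
      by (rule nn_integral_measure_pmf)
    also have "\<dots> = (\<integral>\<^sup>+k. ennreal ((2 - sqrt 2) * (aa / u) ^ k) \<partial>count_space UNIV)"
      apply (rule nn_integral_cong)
      apply (subst ennreal_mult'[symmetric])
       apply simp
      apply (subst pmf_geometric[OF q(1) q(2)])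
      apply (rule arg_cong[where f=ennreal])
      apply (rule e)
      done
    finally show ?thesis by (simp only: nn_integral_count_space_nat)
  qed
  also have "\<dots> = ennreal ((2 - sqrt 2) * (1 / (1 - aa / u)))"
    by (rule suminf_ennreal_eq[OF _ s]) (use q up aa_pos in auto)
  also have "(2 - sqrt 2) * (1 / (1 - aa / u)) = (2 - sqrt 2) * u / (u - aa)"
    using up u by (simp add: field_simps)
  finally show ?thesis .
qed

definition phi :: "real \<Rightarrow> real" where "phi u = aa * u * (u + aa) / (u - aa)"

lemma step_mgf:
  assumes u: "u > aa"
  shows "(\<integral>\<^sup>+x. ennreal (u powr real_of_int x) \<partial>step_pmf) = ennreal (phi u)"
proof -
  have up: "u > 0" using u aa_pos by linarith
  define G where "G = (2 - sqrt 2) * u / (u - aa)"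
  have G0: "G \<ge> 0" unfolding G_def using u up sqrt2_bnd by auto
  have inner: "(\<integral>\<^sup>+b. ennreal (u powr real_of_int (a + b)) \<partial>X2_pmf) = ennreal (u powr real_of_int a * G)"
    for a :: int
  proof -
    have "(\<integral>\<^sup>+b. ennreal (u powr real_of_int (a + b)) \<partial>X2_pmf)
       = (\<integral>\<^sup>+k. ennreal (u powr real_of_int a) * ennreal (u powr (- real k)) \<partial>geometric_pmf (2 - sqrt 2))"
      unfolding X2_pmf_def nn_integral_map_pmf
      apply (rule nn_integral_cong)
      apply (subst ennreal_mult'[symmetric])
       apply simp
      apply (simp add: powr_add[symmetric])
      done
    also have "\<dots> = ennreal (u powr real_of_int a) * ennreal G"
      by (simp add: nn_integral_cmult geom_mgf[OF u] G_def)
    also have "\<dots> = ennreal (u powr real_of_int a * G)"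
      by (simp add: ennreal_mult')
    finally show ?thesis .
  qed
  have p: "0 \<le> 1 / sqrt (2::real)" "1 / sqrt (2::real) \<le> 1" using sqrt2_bnd by auto
  have "(\<integral>\<^sup>+x. ennreal (u powr real_of_int x) \<partial>step_pmf)
      = (\<integral>\<^sup>+a. ennreal (u powr real_of_int a * G) \<partial>X1_pmf)"
    unfolding step_pmf_def nn_integral_map_pmf nn_integral_pair_pmf'
    by (simp add: inner del: of_int_add)
  also have "\<dots> = ennreal (u * G) * ennreal (1 / sqrt 2) + ennreal G * ennreal (1 - 1 / sqrt 2)"
    unfolding X1_pmf_def nn_integral_map_pmf
    by (subst nn_integral_bernoulli_pmf[OF p]) (use up in auto)
  also have "\<dots> = ennreal (u * G * (1 / sqrt 2) + G * (1 - 1 / sqrt 2))"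
  proof -
    have "u * G \<ge> 0" using G0 up by simp
    then have e1: "ennreal (u * G) * ennreal (1 / sqrt 2) = ennreal (u * G * (1 / sqrt 2))"
      by (rule ennreal_mult'[symmetric])
    have e2: "ennreal G * ennreal (1 - 1 / sqrt 2) = ennreal (G * (1 - 1 / sqrt 2))"
      using G0 by (rule ennreal_mult'[symmetric])
    have n1: "u * G * (1 / sqrt 2) \<ge> 0" using G0 up by simp
    have n2: "G * (1 - 1 / sqrt 2) \<ge> 0" using G0 p by simp
    show ?thesis unfolding e1 e2 using ennreal_plus[OF n1 n2] by simp
  qed
  also have "u * G * (1 / sqrt 2) + G * (1 - 1 / sqrt 2) = phi u"
  proof -
    have s2: "sqrt 2 \<noteq> (0::real)" by simp
    have ua: "u - aa \<noteq> 0" using u by simp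
    have Gd: "G = sqrt 2 * aa * u / (u - aa)" unfolding G_def using aa_q by simp
    have "u * G * (1 / sqrt 2) + G * (1 - 1 / sqrt 2) = G * (u + (sqrt 2 - 1)) / sqrt 2"
      using s2 by (simp add: field_simps)
    also have "\<dots> = G * (u + aa) / sqrt 2" by (simp add: aa_def)
    also have "\<dots> = phi u"
      unfolding Gd phi_def using s2 ua by (simp add: field_simps)
    finally show ?thesis .
  qed
  finally show ?thesis .
qed



fun maxS :: "int list \<Rightarrow> int" where
  "maxS [] = 0"
| "maxS (x # xs) = max 0 (x + maxS xs)"

lemma S_Cons_Suc: "S (x # xs) (Suc k) = x + S xs k"
  by (simp add: S_def)

lemma S_0: "S xs 0 = 0"
  by (simp add: S_def)

lemma maxS_eq: "(MAX k\<in>{0..length xs}. S xs k) = maxS xs"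
proof (induction xs)
  case Nil
  then show ?case by (simp add: S_0)
next
  case (Cons x xs)
  have set: "{0..length (x # xs)} = insert 0 (Suc ` {0..length xs})"
    by (auto simp: image_iff)
  have "(MAX k\<in>{0..length (x # xs)}. S (x # xs) k)
      = max (S (x # xs) 0) (MAX k\<in>Suc ` {0..length xs}. S (x # xs) k)"
    unfolding set by (simp add: image_insert del: insert_image)
  also have "(MAX k\<in>Suc ` {0..length xs}. S (x # xs) k) = (MAX k\<in>{0..length xs}. S xs k + x)"
    by (simp add: image_image S_Cons_Suc add.commute del: image_Suc_atLeastAtMost)
  also have "\<dots> = (MAX k\<in>{0..length xs}. S xs k) + x"
    by (rule Max_add_commute) auto
  finally show ?case using Cons by (simp add: S_0 add.commute)
qed

lemma phi_ge1: assumes "u \<ge> 1" shows "phi u \<ge> 1"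
proof -
  have ua: "u - aa > 0" using assms aa_lt1 by linarith
  have "aa * u * (u + aa) - (u - aa) = aa * (u - 1)^2"
    using aa_sq by (simp add: power2_eq_square algebra_simps) (simp add: aa_def algebra_simps)
  then have "aa * u * (u + aa) \<ge> u - aa" using aa_pos by (smt (verit) zero_le_power2 mult_nonneg_nonneg)
  then show ?thesis unfolding phi_def using ua by simp
qed

lemma emeasure_le_bound: assumes "1 \<le> B" shows "emeasure (measure_pmf p) A \<le> ennreal B"
proof -
  have "emeasure (measure_pmf p) A \<le> 1" by (rule measure_pmf.emeasure_le_1)
  also have "(1::ennreal) \<le> ennreal B" using ennreal_leI[OF assms] by simp
  finally show ?thesis .
qed

lemma max_bound_enn:
  assumes u: "u \<ge> 1"
  shows "emeasure (measure_pmf (replicate_pmf m step_pmf)) {xs. c \<le> real_of_int (maxS xs)}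
         \<le> ennreal (phi u ^ m * u powr (- c))"
proof (induction m arbitrary: c)
  case 0
  show ?case
  proof (cases "c \<le> 0")
    case True
    have "1 \<le> u powr (- c)" using u True by (intro ge_one_powr_ge_zero) auto
    then show ?thesis unfolding power_0 mult_1 by (rule emeasure_le_bound)
  next
    case False
    then show ?thesis by simp
  qed
next
  case (Suc m)
  have phi1: "phi u \<ge> 1" using phi_ge1[OF u] .
  show ?case
  proof (cases "c \<le> 0")
    case True
    have "1 \<le> u powr (- c)" using u True by (intro ge_one_powr_ge_zero) auto
    moreover have "1 \<le> phi u ^ Suc m" by (rule one_le_power[OF phi1])
    ultimately have "1 * 1 \<le> phi u ^ Suc m * u powr (- c)"
      by (intro mult_mono) auto
    then show ?thesis by (intro emeasure_le_bound) simp
  next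
    case False
    let ?A = "\<lambda>c. {xs. c \<le> real_of_int (maxS xs)}"
    have ind: "indicator (?A c) (x # xs) = (indicator (?A (c - real_of_int x)) xs :: ennreal)" for x xs
      using False by (auto simp: indicator_def)
    have "emeasure (measure_pmf (replicate_pmf (Suc m) step_pmf)) (?A c)
        = (\<integral>\<^sup>+xs. indicator (?A c) xs \<partial>replicate_pmf (Suc m) step_pmf)"
      by (simp add: nn_integral_indicator)
    also have "\<dots> = (\<integral>\<^sup>+x. \<integral>\<^sup>+xs. indicator (?A (c - real_of_int x)) xs \<partial>replicate_pmf m step_pmf \<partial>step_pmf)"
      by (simp add: ind)
    also have "\<dots> = (\<integral>\<^sup>+x. emeasure (measure_pmf (replicate_pmf m step_pmf)) (?A (c - real_of_int x)) \<partial>step_pmf)"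
      by (simp add: nn_integral_indicator)
    also have "\<dots> \<le> (\<integral>\<^sup>+x. ennreal (phi u ^ m * u powr (- c)) * ennreal (u powr real_of_int x) \<partial>step_pmf)"
    proof (rule nn_integral_mono)
      fix x :: int
      have "phi u ^ m * u powr (- (c - real_of_int x)) = (phi u ^ m * u powr (- c)) * u powr real_of_int x"
        by (simp add: powr_add[symmetric])
      then show "emeasure (measure_pmf (replicate_pmf m step_pmf)) (?A (c - real_of_int x))
          \<le> ennreal (phi u ^ m * u powr (- c)) * ennreal (u powr real_of_int x)"
        using Suc.IH[of "c - real_of_int x"] phi1 by (simp add: ennreal_mult'[symmetric] mult.assoc)
    qed
    also have "\<dots> = ennreal (phi u ^ m * u powr (- c)) * ennreal (phi u)"
      using u aa_lt1 by (simp add: nn_integral_cmult step_mgf)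
    also have "\<dots> = ennreal (phi u ^ Suc m * u powr (- c))"
      using phi1 by (simp add: ennreal_mult'[symmetric] mult_ac)
    finally show ?thesis .
  qed
qed



lemma sqrt2_bnd2: "sqrt (2::real) < 1.42"
  by (rule real_less_lsqrt) (simp_all add: power2_eq_square)

lemma ln_aa: "ln aa = - ln (sqrt 2 + 1)"
proof -
  have "ln aa + ln (sqrt 2 + 1) = ln (aa * (sqrt 2 + 1))"
    using aa_pos sqrt2_bnd by (simp add: ln_mult)
  also have "\<dots> = 0" using aa_inv by simp
  finally show ?thesis by simp
qed

definition Uopt :: "real \<Rightarrow> real" where
  "Uopt x = aa * (1 + sqrt (1 + (1 - x)^2)) / (1 - x)"

lemma Uopt_ge1:
  assumes "0 \<le> x" "x < 1"
  shows "Uopt x \<ge> 1"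
proof -
  define y where "y = 1 - x"
  define r where "r = sqrt (1 + y^2)"
  have y: "0 < y" "y \<le> 1" using assms unfolding y_def by auto
  have r0: "r \<ge> 0" unfolding r_def by simp
  have key: "y * (sqrt 2 + 1) \<le> 1 + r"
  proof (cases "y * (sqrt 2 + 1) - 1 \<le> 0")
    case True then show ?thesis using r0 by linarith
  next
    case False
    have s2: "sqrt 2 * sqrt 2 = (2::real)" by simp
    have "(y * (sqrt 2 + 1) - 1)^2 = 1 + y^2 + 2 * (1 + sqrt 2) * y * (y - 1)"
      by (simp add: power2_eq_square algebra_simps s2)
    also have "\<dots> \<le> 1 + y^2"
      using y sqrt2_bnd by (simp add: mult_nonneg_nonpos)
    finally have "y * (sqrt 2 + 1) - 1 \<le> r"
      unfolding r_def by (rule real_le_rsqrt)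
    then show ?thesis by linarith
  qed
  have "aa * (y * (sqrt 2 + 1)) \<le> aa * (1 + r)"
    using key aa_pos by (intro mult_left_mono) auto
  moreover have "aa * (y * (sqrt 2 + 1)) = y" by (metis aa_inv mult.left_commute mult.right_neutral)
  ultimately have "y \<le> aa * (1 + r)" by linarith
  then show ?thesis unfolding Uopt_def using y by (simp add: y_def r_def)
qed

definition gfun :: "real \<Rightarrow> real \<Rightarrow> real" where
  "gfun x u = x * ln u - ln (phi u)"

lemma rate_eq:
  assumes "0 \<le> x" "x < 1"
  shows "rate_I x = gfun x (Uopt x)"
proof -
  define y where "y = 1 - x"
  define r where "r = sqrt (1 + y^2)"
  define L where "L = ln (sqrt 2 + 1)"
  define U where "U = Uopt x"
  have y: "0 < y" "y \<le> 1" using assms unfolding y_def by auto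
  have r1: "r \<ge> 1" unfolding r_def by simp
  have rsq: "r^2 = 1 + y^2" unfolding r_def by simp
  have U1: "U \<ge> 1" unfolding U_def using Uopt_ge1[OF assms] .
  have Ud: "U = aa * ((1 + r) / y)" unfolding U_def Uopt_def r_def y_def by simp
  have lnU: "ln U = - L - ln (y / (1 + r))"
  proof -
    have "ln U = ln aa + ln ((1 + r) / y)" unfolding Ud by (subst ln_mult) (use aa_pos y r1 in auto)
    also have "ln ((1 + r) / y) = - ln (y / (1 + r))" using y r1 by (simp add: ln_div)
    finally show ?thesis using ln_aa unfolding L_def by simp
  qed
  have Ua: "U - aa > 0" "U + aa > 0" using U1 aa_lt1 aa_pos by auto
  have q: "(U + aa) / (U - aa) = (2 - x + r) / (x + r)"
  proof -
    have a1: "U + aa = (aa / y) * (1 + r + y)" unfolding Ud using y by (simp add: field_simps)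
    have a2: "U - aa = (aa / y) * (1 + r - y)" unfolding Ud using y by (simp add: field_simps)
    have pos: "1 + r - y > 0" using r1 y by simp
    have "(U + aa) / (U - aa) = ((aa / y) * (1 + r + y)) / ((aa / y) * (1 + r - y))" unfolding a1 a2 ..
    also have "\<dots> = (1 + r + y) / (1 + r - y)" by (subst mult_divide_mult_cancel_left_if) (use y aa_pos in simp)
    also have "1 + r + y = 2 - x + r" unfolding y_def by simp
    also have "1 + r - y = x + r" unfolding y_def by simp
    finally show ?thesis .
  qed
  have lnphi: "ln (phi U) = ln aa + ln U + ln ((U + aa) / (U - aa))"
  proof -
    have e: "phi U = (aa * U) * ((U + aa) / (U - aa))" unfolding phi_def by simp
    have l1: "ln (phi U) = ln (aa * U) + ln ((U + aa) / (U - aa))"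
      unfolding e by (rule ln_mult_pos) (use aa_pos U1 Ua in auto)
    have l2: "ln (aa * U) = ln aa + ln U" by (rule ln_mult_pos) (use aa_pos U1 in auto)
    show ?thesis using l1 l2 by simp
  qed
  have lnq: "ln ((2 - x + r) / (x + r)) = - ln ((x + r) / (2 - x + r))"
    using r1 assms by (simp add: ln_div)
  have "gfun x U = - y * ln U - ln aa - ln ((U + aa) / (U - aa))"
    unfolding gfun_def lnphi y_def by (simp add: algebra_simps)
  also have "\<dots> = (2 - x) * L + y * ln (y / (1 + r)) + ln ((x + r) / (2 - x + r))"
    unfolding lnU q lnq ln_aa L_def[symmetric] y_def by (simp add: algebra_simps)
  finally show ?thesis unfolding rate_I_def U_def r_def y_def L_def by simp
qed



lemma deriv_h: "w > 0 \<Longrightarrow> w - a > 0 \<Longrightarrow> w + a > 0 \<Longrightarrow> ((\<lambda>w. x * ln w - (c + ln w + ln (w + a) - ln (w - a))) has_real_derivative ((x - 1) / w - 1 / (w + a) + 1 / (w - a))) (at w)"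
  apply (rule derivative_eq_intros refl | assumption)+
  apply (simp add: diff_divide_distrib add_divide_distrib)
  done

lemma comm_den: fixes w a x :: real assumes nz: "w \<noteq> 0" "w + a \<noteq> 0" "w - a \<noteq> 0"
 shows "(x - 1) / w - 1 / (w + a) + 1 / (w - a) = ((x - 1) * (w + a) * (w - a) - w * (w - a) + w * (w + a)) / (w * (w + a) * (w - a))"
  using nz by (simp add: divide_simps) (simp add: algebra_simps)

lemma Dform_alg:
  fixes w a x y U W :: real
  assumes w: "w > 0" "w + a > 0" "w - a > 0" and y: "y = 1 - x" "y > 0"
    and s: "U + W = 2 * a / y" and p: "U * W = -(a * a)"
  shows "(x - 1) / w - 1 / (w + a) + 1 / (w - a) = - y * ((w - U) * (w - W)) / (w * (w + a) * (w - a))"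
proof -
  have e: "(w - U) * (w - W) = w * w - (U + W) * w + U * W" by (simp add: algebra_simps)
  have N: "y * ((w - U) * (w - W)) = y * w * w - 2 * a * w - y * a * a"
    unfolding e s p using y by (simp add: field_simps)
  have "(x - 1) / w - 1 / (w + a) + 1 / (w - a) = ((x - 1) * (w + a) * (w - a) - w * (w - a) + w * (w + a)) / (w * (w + a) * (w - a))"
    by (rule comm_den) (use w in auto)
  also have "(x - 1) * (w + a) * (w - a) - w * (w - a) + w * (w + a) = - (y * w * w - 2 * a * w - y * a * a)"
  proof -
    have xy: "x = 1 - y" using y by simp
    show ?thesis unfolding xy by (simp add: algebra_simps)
  qed
  finally show ?thesis unfolding N[symmetric] by simp
qed

lemma gfun_opt:
  assumes x: "0 \<le> x" "x < 1" and v: "v > aa"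
  shows "gfun x v \<le> gfun x (Uopt x)"
proof -
  define y where "y = 1 - x"
  define r where "r = sqrt (1 + y^2)"
  define U where "U = Uopt x"
  define W where "W = aa * (1 - r) / y"
  have y: "0 < y" "y \<le> 1" using x unfolding y_def by auto
  have r1: "r \<ge> 1" unfolding r_def by simp
  have rsq: "r * r = 1 + y * y" unfolding r_def by (simp add: power2_eq_square)
  have U1: "U \<ge> 1" unfolding U_def using Uopt_ge1[OF x] .
  have Ud: "U = aa * (1 + r) / y" unfolding U_def Uopt_def r_def y_def by simp
  have W0: "W \<le> 0" unfolding W_def using r1 aa_pos y by (simp add: divide_nonpos_pos mult_nonneg_nonpos)
  have sumUW: "U + W = 2 * aa / y" unfolding Ud W_def using y by (simp add: field_simps)
  have prodUW: "U * W = -(aa * aa)"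
  proof -
    have "U * W = aa * aa * (1 - r * r) / (y * y)" unfolding Ud W_def using y by (simp add: field_simps)
    also have "\<dots> = -(aa * aa)" unfolding rsq using y by (simp add: field_simps power2_eq_square)
    finally show ?thesis .
  qed
  define h where "h w = x * ln w - (ln aa + ln w + ln (w + aa) - ln (w - aa))" for w
  have hg: "h w = gfun x w" if "w > aa" for w
  proof -
    have w0: "w > 0" "w + aa > 0" "w - aa > 0" using that aa_pos by auto
    have l1: "ln (phi w) = ln (aa * w * (w + aa)) - ln (w - aa)"
      unfolding phi_def by (rule ln_divide_pos) (use w0 aa_pos in auto)
    have l2: "ln (aa * w * (w + aa)) = ln (aa * w) + ln (w + aa)"
      by (rule ln_mult_pos) (use w0 aa_pos in auto)
    have l3: "ln (aa * w) = ln aa + ln w" by (rule ln_mult_pos) (use w0 aa_pos in auto)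
    show ?thesis unfolding h_def gfun_def using l1 l2 l3 by simp
  qed
  define D where "D w = (x - 1) / w - 1 / (w + aa) + 1 / (w - aa)" for w
  have hd: "DERIV h w :> D w" if "w > aa" for w
  proof -
    have w0: "w > 0" "w + aa > 0" "w - aa > 0" using that aa_pos by auto
    show ?thesis unfolding h_def D_def by (rule deriv_h) (use w0 in auto)
  qed
  have Dform: "D w = - y * ((w - U) * (w - W)) / (w * (w + aa) * (w - aa))" if "w > aa" for w
    unfolding D_def by (rule Dform_alg) (use that aa_pos y sumUW prodUW in \<open>auto simp: y_def\<close>)
  have hvU: "h v \<le> h U"
  proof (cases "v \<le> U")
    case True
    show ?thesis
    proof (rule DERIV_nonneg_imp_nondecreasing[OF True])
      fix t assume t: "v \<le> t" "t \<le> U"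
      have ta: "t > aa" using t v by linarith
      have t0: "t > 0" "t + aa > 0" "t - aa > 0" using ta aa_pos by auto
      have "(t - U) * (t - W) \<le> 0" by (rule mult_nonpos_nonneg) (use t W0 t0 in auto)
      then have "y * ((t - U) * (t - W)) \<le> 0" by (rule mult_nonneg_nonpos[rotated]) (use y in auto)
      then have "- y * ((t - U) * (t - W)) \<ge> 0" by simp
      then have "D t \<ge> 0" unfolding Dform[OF ta] by (rule divide_nonneg_pos) (use t0 in simp)
      then show "\<exists>d. DERIV h t :> d \<and> d \<ge> 0" using hd[OF ta] by blast
    qed
  next
    case False
    then have vU: "U \<le> v" by simp
    have "h v \<le> h U"
    proof (rule DERIV_nonpos_imp_nonincreasing[OF vU])
      fix t assume t: "U \<le> t" "t \<le> v"
      have ta: "t > aa" using t U1 aa_lt1 by linarith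
      have t0: "t > 0" "t + aa > 0" "t - aa > 0" using ta aa_pos by auto
      have "(t - U) * (t - W) \<ge> 0" by (rule mult_nonneg_nonneg) (use t W0 t0 in auto)
      then have "y * ((t - U) * (t - W)) \<ge> 0" by (rule mult_nonneg_nonneg[rotated]) (use y in auto)
      then have "- y * ((t - U) * (t - W)) \<le> 0" by simp
      then have "D t \<le> 0" unfolding Dform[OF ta] by (rule divide_nonpos_pos) (use t0 in simp)
      then show "\<exists>d. DERIV h t :> d \<and> d \<le> 0" using hd[OF ta] by blast
    qed
    then show ?thesis .
  qed
  have "U > aa" using U1 aa_lt1 by linarith
  then show ?thesis using hvU hg[OF v] hg unfolding U_def by simp
qed




lemma phi_minus1: assumes "u > aa" shows "phi u - 1 = aa * (u - 1)^2 / (u - aa)"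
proof -
  have ua: "u - aa \<noteq> 0" using assms by simp
  have "aa * u * (u + aa) - (u - aa) = aa * (u - 1)^2"
    using aa_sq by (simp add: power2_eq_square algebra_simps) (simp add: aa_def algebra_simps)
  then show ?thesis unfolding phi_def using ua by (simp add: field_simps)
qed

lemma phi_pos: assumes "u > aa" shows "phi u > 0"
  unfolding phi_def using assms aa_pos by simp

lemma gfun_lower:
  assumes x: "0 \<le> x" "x \<le> 1"
  shows "gfun x (1 + x / 2) \<ge> x^2 / 16"
proof -
  define v where "v = 1 + x / 2"
  have va: "v > aa" unfolding v_def using x aa_lt1 by linarith
  have l1: "x / 2 - (x / 2)^2 \<le> ln (1 + x / 2)"
    by (rule ln_one_plus_pos_lower_bound) (use x in auto)
  have "x * (x / 2 - (x / 2)^2) \<le> x * ln v"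
    unfolding v_def using l1 x by (intro mult_left_mono) auto
  moreover have "x^2 / 4 \<le> x * (x / 2 - (x / 2)^2)"
  proof -
    have "x^3 \<le> x^2" using x by (simp add: power_decreasing)
    then show ?thesis by (simp add: power2_eq_square power3_eq_cube algebra_simps)
  qed
  ultimately have A: "x^2 / 4 \<le> x * ln v" by linarith
  have "ln (phi v) \<le> phi v - 1" by (rule ln_le_minus_one) (rule phi_pos[OF va])
  also have "\<dots> = aa * (x / 2)^2 / (v - aa)" using phi_minus1[OF va] unfolding v_def by simp
  also have "\<dots> \<le> aa * (x / 2)^2 / (1 - aa)"
    using aa_pos aa_lt1 x unfolding v_def by (intro divide_left_mono mult_pos_pos) auto
  also have "\<dots> \<le> 3 * x^2 / 16"
  proof -
    have "aa \<le> 3 / 7" unfolding aa_def using sqrt2_bnd2 by simp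
    then have "aa \<le> 3 / 4 * (1 - aa)" by simp
    then have "aa / (1 - aa) \<le> 3 / 4" using aa_lt1 by (simp add: divide_simps)
    then have "aa / (1 - aa) * (x^2 / 4) \<le> 3 / 4 * (x^2 / 4)" by (intro mult_right_mono) auto
    then show ?thesis by (simp add: power2_eq_square field_simps)
  qed
  finally have B: "ln (phi v) \<le> 3 * x^2 / 16" .
  show ?thesis using A B unfolding gfun_def v_def[symmetric] by simp
qed

lemma set_step: "z \<in> set_pmf step_pmf \<Longrightarrow> z \<le> 1"
  unfolding step_pmf_def X1_pmf_def X2_pmf_def by (auto simp: set_pair_pmf)

lemma maxS_le: "(\<forall>z\<in>set xs. z \<le> 1) \<Longrightarrow> maxS xs \<le> int (length xs)"
  by (induction xs) auto

lemma supp: "xs \<in> set_pmf (steps_pmf m) \<Longrightarrow> length xs = m \<and> (\<forall>z\<in>set xs. z \<le> 1)"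
  unfolding steps_pmf_def set_replicate_pmf using set_step by (auto simp: in_lists_conv_set)

lemma prob_max_eq:
  "measure_pmf.prob (steps_pmf m) {xs. c \<le> real_of_int (MAX k\<in>{0..m}. S xs k)}
   = measure_pmf.prob (replicate_pmf m step_pmf) {xs. c \<le> real_of_int (maxS xs)}"
proof -
  let ?p = "steps_pmf m"
  have "{xs. c \<le> real_of_int (MAX k\<in>{0..m}. S xs k)} \<inter> set_pmf ?p
      = {xs. c \<le> real_of_int (maxS xs)} \<inter> set_pmf ?p"
    using supp maxS_eq by fastforce
  then show ?thesis using measure_Int_set_pmf unfolding steps_pmf_def by metis
qed

lemma prob_S_le:
  "measure_pmf.prob (steps_pmf m) {xs. c \<le> real_of_int (S xs m)}
   \<le> measure_pmf.prob (steps_pmf m) {xs. c \<le> real_of_int (MAX k\<in>{0..m}. S xs k)}"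
proof -
  let ?p = "steps_pmf m"
  have "measure_pmf.prob ?p {xs. c \<le> real_of_int (S xs m)}
      = measure_pmf.prob ?p ({xs. c \<le> real_of_int (S xs m)} \<inter> set_pmf ?p)"
    by (rule measure_Int_set_pmf[symmetric])
  also have "\<dots> \<le> measure_pmf.prob ?p {xs. c \<le> real_of_int (MAX k\<in>{0..m}. S xs k)}"
  proof (rule measure_pmf.finite_measure_mono)
    show "{xs. c \<le> real_of_int (S xs m)} \<inter> set_pmf ?p \<subseteq> {xs. c \<le> real_of_int (MAX k\<in>{0..m}. S xs k)}"
    proof safe
      fix xs assume "c \<le> real_of_int (S xs m)"
      moreover have "S xs m \<le> (MAX k\<in>{0..m}. S xs k)" by (rule Max_ge) auto
      ultimately show "c \<le> real_of_int (MAX k\<in>{0..m}. S xs k)" by linarith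
    qed
  qed simp
  finally show ?thesis .
qed

lemma prob_bound:
  assumes u: "u \<ge> 1"
  shows "measure_pmf.prob (steps_pmf m) {xs. c \<le> real_of_int (MAX k\<in>{0..m}. S xs k)} \<le> phi u ^ m * u powr (- c)"
proof -
  have B0: "phi u ^ m * u powr (- c) \<ge> 0" using phi_ge1[OF u] by simp
  have "ennreal (measure_pmf.prob (replicate_pmf m step_pmf) {xs. c \<le> real_of_int (maxS xs)}) \<le> ennreal (phi u ^ m * u powr (- c))"
    using max_bound_enn[OF u, of m c] by (simp add: measure_pmf.emeasure_eq_measure)
  then show ?thesis unfolding prob_max_eq using B0 by (simp add: ennreal_le_iff)
qed

lemma exp_form:
  assumes u: "u \<ge> 1"
  shows "phi u ^ m * u powr (- (x * real m)) = exp (- real m * gfun x u)"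
proof -
  have p: "phi u > 0" using phi_ge1[OF u] by simp
  have "phi u ^ m = exp (real m * ln (phi u))"
    using p by (simp add: exp_of_nat_mult)
  moreover have "u powr (- (x * real m)) = exp (- (x * real m) * ln u)"
    using u by (simp add: powr_def)
  ultimately have "phi u ^ m * u powr (- (x * real m)) = exp (real m * ln (phi u) + - (x * real m) * ln u)"
    by (simp add: exp_add[symmetric])
  also have "real m * ln (phi u) + - (x * real m) * ln u = - real m * gfun x u"
    unfolding gfun_def by (simp add: algebra_simps)
  finally show ?thesis .
qed

lemma part1:
  assumes m: "m > 0" and x: "0 \<le> x" "x < 1"
  shows "measure_pmf.prob (steps_pmf m) {xs. real_of_int (MAX k\<in>{0..m}. S xs k) \<ge> x * real m}
           \<le> exp (- real m * rate_I x)
         \<and> measure_pmf.prob (steps_pmf m) {xs. real_of_int (S xs m) \<ge> x * real m}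
           \<le> exp (- real m * rate_I x)"
proof -
  have U1: "Uopt x \<ge> 1" using Uopt_ge1 x by auto
  have b: "phi (Uopt x) ^ m * Uopt x powr (- (x * real m)) = exp (- real m * rate_I x)"
    using exp_form[OF U1, of m x] rate_eq[OF x] by simp
  have A: "measure_pmf.prob (steps_pmf m) {xs. real_of_int (MAX k\<in>{0..m}. S xs k) \<ge> x * real m}
           \<le> exp (- real m * rate_I x)"
    using prob_bound[OF U1, of m "x * real m"] b by simp
  moreover have "measure_pmf.prob (steps_pmf m) {xs. real_of_int (S xs m) \<ge> x * real m}
           \<le> exp (- real m * rate_I x)"
    using prob_S_le[where m=m and c="x * real m"] A by linarith
  ultimately show ?thesis by blast
qed

lemma rate_lower:
  assumes x: "0 \<le> x" "x < 1"
  shows "rate_I x \<ge> 1 / 16 * x^2"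
proof -
  have v: "1 + x / 2 > aa" using x aa_lt1 by linarith
  have "x^2 / 16 \<le> gfun x (1 + x / 2)" using gfun_lower x by simp
  also have "\<dots> \<le> gfun x (Uopt x)" by (rule gfun_opt[OF x v])
  also have "\<dots> = rate_I x" using rate_eq[OF x] by simp
  finally show ?thesis by simp
qed

lemma part2:
  assumes m: "m > 0" and x: "x \<ge> 0"
  shows "measure_pmf.prob (steps_pmf m) {xs. real_of_int (MAX k\<in>{0..m}. S xs k) \<ge> x * real m}
           \<le> exp (- (1 / 16) * real m * x^2)
         \<and> measure_pmf.prob (steps_pmf m) {xs. real_of_int (S xs m) \<ge> x * real m}
           \<le> exp (- (1 / 16) * real m * x^2)"
proof -
  have A: "measure_pmf.prob (steps_pmf m) {xs. real_of_int (MAX k\<in>{0..m}. S xs k) \<ge> x * real m}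
           \<le> exp (- (1 / 16) * real m * x^2)"
  proof (cases "x \<le> 1")
    case True
    have v1: "1 + x / 2 \<ge> 1" using x by simp
    have g: "gfun x (1 + x / 2) \<ge> x^2 / 16" using gfun_lower x True by simp
    have "measure_pmf.prob (steps_pmf m) {xs. real_of_int (MAX k\<in>{0..m}. S xs k) \<ge> x * real m}
          \<le> phi (1 + x / 2) ^ m * (1 + x / 2) powr (- (x * real m))"
      by (rule prob_bound[OF v1])
    also have "\<dots> = exp (- real m * gfun x (1 + x / 2))" by (rule exp_form[OF v1])
    also have "\<dots> \<le> exp (- (1 / 16) * real m * x^2)"
    proof -
      have "real m * (x^2 / 16) \<le> real m * gfun x (1 + x / 2)"
        using g by (intro mult_left_mono) auto
      then show ?thesis by simp
    qed
    finally show ?thesis .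
  next
    case False
    have "measure_pmf.prob (steps_pmf m) {xs. real_of_int (MAX k\<in>{0..m}. S xs k) \<ge> x * real m} = 0"
      unfolding measure_pmf_zero_iff
    proof (rule ccontr)
      assume "set_pmf (steps_pmf m) \<inter> {xs. real_of_int (MAX k\<in>{0..m}. S xs k) \<ge> x * real m} \<noteq> {}"
      then obtain xs where xs: "xs \<in> set_pmf (steps_pmf m)"
        and ge: "real_of_int (MAX k\<in>{0..m}. S xs k) \<ge> x * real m" by blast
      have len: "length xs = m" and le1: "\<forall>z\<in>set xs. z \<le> 1" using supp[OF xs] by auto
      have "(MAX k\<in>{0..m}. S xs k) = maxS xs" using maxS_eq[of xs] len by simp
      also have "\<dots> \<le> int m" using maxS_le[OF le1] len by simp
      finally have "real_of_int (MAX k\<in>{0..m}. S xs k) \<le> real m" by linarith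
      moreover have "real m < x * real m" using False m by simp
      ultimately show False using ge by linarith
    qed
    then show ?thesis by simp
  qed
  moreover have "measure_pmf.prob (steps_pmf m) {xs. real_of_int (S xs m) \<ge> x * real m}
           \<le> exp (- (1 / 16) * real m * x^2)"
    using prob_S_le[where m=m and c="x * real m"] A by linarith
  ultimately show ?thesis by blast
qed

theorem proposition2p3:
  shows "(\<forall>m::nat. m > 0 \<longrightarrow> (\<forall>x::real. 0 \<le> x \<and> x < 1 \<longrightarrow>
            measure_pmf.prob (steps_pmf m)
              {xs. real_of_int (MAX k\<in>{0..m}. S xs k) \<ge> x * real m}
              \<le> exp (- real m * rate_I x)
          \<and> measure_pmf.prob (steps_pmf m)
              {xs. real_of_int (S xs m) \<ge> x * real m}
              \<le> exp (- real m * rate_I x)))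
       \<and> (\<exists>\<epsilon>>0. (\<forall>x::real. 0 \<le> x \<and> x < 1 \<longrightarrow> rate_I x \<ge> \<epsilon> * x^2)
          \<and> (\<forall>m::nat. m > 0 \<longrightarrow> (\<forall>x::real. x \<ge> 0 \<longrightarrow>
              measure_pmf.prob (steps_pmf m)
                {xs. real_of_int (MAX k\<in>{0..m}. S xs k) \<ge> x * real m}
                \<le> exp (- \<epsilon> * real m * x^2)
            \<and> measure_pmf.prob (steps_pmf m)
                {xs. real_of_int (S xs m) \<ge> x * real m}
                \<le> exp (- \<epsilon> * real m * x^2))))"
proof (intro conjI)
  show "\<forall>m::nat. m > 0 \<longrightarrow> (\<forall>x::real. 0 \<le> x \<and> x < 1 \<longrightarrow>
            measure_pmf.prob (steps_pmf m)
              {xs. real_of_int (MAX k\<in>{0..m}. S xs k) \<ge> x * real m}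
              \<le> exp (- real m * rate_I x)
          \<and> measure_pmf.prob (steps_pmf m)
              {xs. real_of_int (S xs m) \<ge> x * real m}
              \<le> exp (- real m * rate_I x))"
    using part1 by blast
  show "\<exists>\<epsilon>>0. (\<forall>x::real. 0 \<le> x \<and> x < 1 \<longrightarrow> rate_I x \<ge> \<epsilon> * x^2)
          \<and> (\<forall>m::nat. m > 0 \<longrightarrow> (\<forall>x::real. x \<ge> 0 \<longrightarrow>
              measure_pmf.prob (steps_pmf m)
                {xs. real_of_int (MAX k\<in>{0..m}. S xs k) \<ge> x * real m}
                \<le> exp (- \<epsilon> * real m * x^2)
            \<and> measure_pmf.prob (steps_pmf m)
                {xs. real_of_int (S xs m) \<ge> x * real m}
                \<le> exp (- \<epsilon> * real m * x^2)))"
  proof (rule exI[of _ "1 / 16"], intro conjI)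
    show "(0::real) < 1 / 16" by simp
    show "\<forall>x::real. 0 \<le> x \<and> x < 1 \<longrightarrow> rate_I x \<ge> 1 / 16 * x^2"
      using rate_lower by blast
    show "\<forall>m::nat. m > 0 \<longrightarrow> (\<forall>x::real. x \<ge> 0 \<longrightarrow>
              measure_pmf.prob (steps_pmf m)
                {xs. real_of_int (MAX k\<in>{0..m}. S xs k) \<ge> x * real m}
                \<le> exp (- (1 / 16) * real m * x^2)
            \<and> measure_pmf.prob (steps_pmf m)
                {xs. real_of_int (S xs m) \<ge> x * real m}
                \<le> exp (- (1 / 16) * real m * x^2))"
      using part2 by blast
  qed
qed

end
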